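(* Let $L^x,L^y>0$, let $i\neq j$ be two boxes, each box $k\in\{i,j\}$ having center $(c^x_k,c^y_k)$, side lengths $(\ell^x_k,\ell^y_k)$ and given constants $lb^s_k>0$ ($s\in\{x,y\}$). Let $$Q^{lb}=\{(c_i,c_j,\ell_i,\ell_j)\in\mathbb{R}^8:\ \tfrac12\ell^s_k\le c^s_k\le L^s-\tfrac12\ell^s_k,\ \ell^s_k\ge lb^s_k\ \ \forall s\in\{x,y\},k\in\{i,j\}\}.$$ Consider binary variables $u^s_{p,q}$ for $s\in\{x,y\}$ and $(p,q)\in\{(i,j),(j,i)\}$, and let $E$ be the set of $(c_i,c_j,\ell_i,\ell_j,u)\in\mathbb{R}^8\times\{0,1\}^4$ such that $(c_i,c_j,\ell_i,\ell_j)\in Q^{lb}$, exactly one of the four variables $u^s_{p,q}$ equals $1$, and $u^s_{p,q}=1$ implies $\mathscr{B}_p\leftarrow_s\mathscr{B}_q$ (i.e. $E$ is the embedding $\operatorname{Em}(Q^{lb},D^4,U^4)$ where the unit vector with $u^s_{p,q}=1$ encodes the branch $\mathscr{B}_p\leftarrow_s\mathscr{B}_q$). Then $E$ equals the set of $(c_i,c_j,\ell_i,\ell_j,u)$ satisfying \begin{align*} &\tfrac12\ell^s_p+lb^s_q u^s_{q,p}\le c^s_p\le L^s-\tfrac12\ell^s_p-lb^s_q u^s_{p,q} &&\forall s\in\{x,y\},(p,q)\in\{(i,j),(j,i)\},\\ &c^s_p+\tfrac12\ell^s_p\le c^s_q-\tfrac12\ell^s_q+L^s(1-u^s_{p,q})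 &&\forall s\in\{x,y\},(p,q)\in\{(i,j),(j,i)\},\\ &\ell^s_p\ge lb^s_p &&\forall s\in\{x,y\},p\in\{i,j\},\\ &u^x_{i,j}+u^x_{j,i}+u^y_{i,j}+u^y_{j,i}=1, &&\\ &u^s_{p,q}\in\{0,1\} &&\forall s\in\{x,y\},(p,q)\in\{(i,j),(j,i)\}. \end{align*} Moreover, if $lb^s_i+lb^s_j<L^s$ for both $s\in\{x,y\}$, then this formulation is ideal: every extreme point of the polyhedron obtained by replacing $u^s_{p,q}\in\{0,1\}$ with $0\le u^s_{p,q}\le 1$ has all $u$-coordinates integral.
   Context: Box $\mathscr{B}_p$ precedes box $\mathscr{B}_q$ in direction $s\in\{x,y\}$, written $\mathscr{B}_p\leftarrow_s\mathscr{B}_q$, if $c^s_p+\tfrac12\ell^s_p\le c^s_q-\tfrac12\ell^s_q$. In the paper, $lb^s_k=\beta_k/ub^s_k$ with $ub^s_k=\min\{\sqrt{\alpha_k\beta_k},L^s\}$ for given area $\alpha_k>0$ and aspect ratio $\beta_k>0$. *)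

theory Defs
  imports "HOL-Analysis.Analysis"
begin

datatype box = BI | BJ
datatype dir = DX | DY

lemma UNIV_box: "(UNIV :: box set) = {BI, BJ}"
  using box.exhaust by auto

lemma UNIV_dir: "(UNIV :: dir set) = {DX, DY}"
  using dir.exhaust by auto

instance box :: finite
  by standard (simp add: UNIV_box)

instance dir :: finite
  by standard (simp add: UNIV_dir)

text \<open>The other box: for the ordered pair (p,q) in {(i,j),(j,i)} we have q = other p.\<close>
fun other :: "box \<Rightarrow> box" where
  "other BI = BJ"
| "other BJ = BI"

text \<open>Variables: centers c with c\$k\$s = c^s_k, side lengths l with l\$k\$s = l^s_k,
  and binary variables u with u\$s\$p = u^s_{p, other p}.
  A point is the triple (c, l, u), an element of R^8 x R^4.\<close>
type_synonym bvec = "real^dir^box"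
type_synonym uvec = "real^box^dir"
type_synonym point = "bvec \<times> bvec \<times> uvec"

definition precedes :: "bvec \<Rightarrow> bvec \<Rightarrow> dir \<Rightarrow> box \<Rightarrow> box \<Rightarrow> bool" where
  "precedes c l s p q \<longleftrightarrow> c$p$s + l$p$s / 2 \<le> c$q$s - l$q$s / 2"

definition Qlb :: "(dir \<Rightarrow> real) \<Rightarrow> (box \<Rightarrow> dir \<Rightarrow> real) \<Rightarrow> (bvec \<times> bvec) set" where
  "Qlb L lb = {(c, l). \<forall>s k. l$k$s / 2 \<le> c$k$s \<and> c$k$s \<le> L s - l$k$s / 2 \<and> l$k$s \<ge> lb k s}"

definition Emb :: "(dir \<Rightarrow> real) \<Rightarrow> (box \<Rightarrow> dir \<Rightarrow> real) \<Rightarrow> point set" where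
  "Emb L lb = {(c, l, u). (c, l) \<in> Qlb L lb \<and> (\<forall>s p. u$s$p \<in> {0, 1})
      \<and> (\<exists>!sp. u$(fst sp)$(snd sp) = 1)
      \<and> (\<forall>s p. u$s$p = 1 \<longrightarrow> precedes c l s p (other p))}"

definition lin_constraints :: "(dir \<Rightarrow> real) \<Rightarrow> (box \<Rightarrow> dir \<Rightarrow> real) \<Rightarrow> point \<Rightarrow> bool" where
  "lin_constraints L lb x \<longleftrightarrow> (case x of (c, l, u) \<Rightarrow>
      (\<forall>s p. l$p$s / 2 + lb (other p) s * u$s$(other p) \<le> c$p$s
           \<and> c$p$s \<le> L s - l$p$s / 2 - lb (other p) s * u$s$p)
    \<and> (\<forall>s p. c$p$s + l$p$s / 2 \<le> c$(other p)$s - l$(other p)$s / 2 + L s * (1 - u$s$p))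
    \<and> (\<forall>s p. l$p$s \<ge> lb p s)
    \<and> u$DX$BI + u$DX$BJ + u$DY$BI + u$DY$BJ = 1)"

definition formulation :: "(dir \<Rightarrow> real) \<Rightarrow> (box \<Rightarrow> dir \<Rightarrow> real) \<Rightarrow> point set" where
  "formulation L lb = {x. lin_constraints L lb x \<and> (\<forall>s p. (snd (snd x))$s$p \<in> {0, 1})}"

definition relaxation :: "(dir \<Rightarrow> real) \<Rightarrow> (box \<Rightarrow> dir \<Rightarrow> real) \<Rightarrow> point set" where
  "relaxation L lb = {x. lin_constraints L lb x \<and> (\<forall>s p. 0 \<le> (snd (snd x))$s$p \<and> (snd (snd x))$s$p \<le> 1)}"

end

theory Submission
  imports Defs
begin


lemma abs_decomp:
  fixes ei fi ej fj aPi aPj bPi bPj gPi gPj ami amj bmi bmj La Lb :: real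
  assumes "ei \<ge> bmj" "fi \<ge> amj" "ej \<ge> ami" "fj \<ge> bmi"
    "ei+fi \<le> aPi+bPi+gPi" "ej+fj \<le> aPj+bPj+gPj" "ej+fi \<ge> La" "ei+fj \<ge> Lb"
    "amj \<le> aPi" "ami \<le> aPj" "bmj \<le> bPi" "bmi \<le> bPj"
    "aPi \<ge> 0" "aPj \<ge> 0" "bPi \<ge> 0" "bPj \<ge> 0" "gPi \<ge> 0" "gPj \<ge> 0"
    "La = aPi + ami" "La = aPj + amj" "Lb = bPi + bmi" "Lb = bPj + bmj"
    "La \<le> aPi + aPj" "Lb \<le> bPi + bPj"
  defines "\<phi> \<equiv> min fi aPi" and "\<phi>' \<equiv> min ej aPj" and "\<psi> \<equiv> min ei bPi" and "\<psi>' \<equiv> min fj bPj"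
  defines "Aei \<equiv> min (ei - \<psi>) (aPi - \<phi>)" and "Bfi \<equiv> min (fi - \<phi>) (bPi - \<psi>)"
    and "Afj \<equiv> min (fj - \<psi>') (aPj - \<phi>')" and "Bej \<equiv> min (ej - \<phi>') (bPj - \<psi>')"
  shows "Aei \<ge> 0 \<and> \<phi> \<ge> amj \<and> \<phi>' \<ge> ami \<and> Afj \<ge> 0 \<and> Aei + \<phi> \<le> aPi \<and> \<phi>' + Afj \<le> aPj \<and> \<phi>' + \<phi> \<ge> La"
    and "\<psi> \<ge> bmj \<and> Bfi \<ge> 0 \<and> Bej \<ge> 0 \<and> \<psi>' \<ge> bmi \<and> \<psi> + Bfi \<le> bPi \<and> Bej + \<psi>' \<le> bPj \<and> \<psi> + \<psi>' \<ge> Lb"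
    and "ei - \<psi> - Aei \<ge> 0 \<and> fi - \<phi> - Bfi \<ge> 0 \<and> ej - \<phi>' - Bej \<ge> 0 \<and> fj - \<psi>' - Afj \<ge> 0"
    and "(ei - \<psi> - Aei) + (fi - \<phi> - Bfi) \<le> gPi"
    and "(ej - \<phi>' - Bej) + (fj - \<psi>' - Afj) \<le> gPj"
  using assms unfolding min_def by auto



definition Kd :: "real \<Rightarrow> real \<Rightarrow> real \<Rightarrow> real \<Rightarrow> real \<times> real \<times> real \<times> real \<Rightarrow> real \<Rightarrow> real \<Rightarrow> bool" where
  "Kd L mi mj w p \<alpha> \<beta> \<longleftrightarrow> (case p of (ci, li, cj, lj) \<Rightarrow>
     li/2 + mj*\<beta> \<le> ci \<and> ci \<le> w*L - li/2 - mj*\<alpha> \<and> lj/2 + mi*\<alpha> \<le> cj \<and> cj \<le> w*L - lj/2 - mi*\<beta>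
     \<and> ci + li/2 \<le> cj - lj/2 + L*(w-\<alpha>) \<and> cj + lj/2 \<le> ci - li/2 + L*(w-\<beta>) \<and> li \<ge> w*mi \<and> lj \<ge> w*mj)"

definition EF :: "real \<Rightarrow> real \<Rightarrow> real \<Rightarrow> real \<Rightarrow> real \<Rightarrow> real \<Rightarrow> real \<Rightarrow> real \<Rightarrow> real \<Rightarrow> real \<Rightarrow> bool" where
  "EF L mi mj w \<alpha> \<beta> ei fi ej fj \<longleftrightarrow> ei \<ge> mj*\<beta> \<and> fi \<ge> mj*\<alpha> \<and> ej \<ge> mi*\<alpha> \<and> fj \<ge> mi*\<beta>
     \<and> ei+fi \<le> w*(L-mi) \<and> ej+fj \<le> w*(L-mj) \<and> ej+fi \<ge> L*\<alpha> \<and> ei+fj \<ge> L*\<beta>"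

lemma Kd_of_EF:
  assumes "EF L mi mj w \<alpha> \<beta> ei fi ej fj"
  shows "Kd L mi mj w ((ei + w*L - fi)/2, w*L - ei - fi, (ej + w*L - fj)/2, w*L - ej - fj) \<alpha> \<beta>"
  using assms unfolding EF_def Kd_def by (simp add: field_simps)

lemma EF_of_Kd:
  assumes "Kd L mi mj 1 (ci,li,cj,lj) a b"
  shows "EF L mi mj 1 a b (ci - li/2) (L - ci - li/2) (cj - lj/2) (L - cj - lj/2)"
  using assms unfolding EF_def Kd_def by (simp add: algebra_simps)

lemma decomp_ef:
  fixes L mi mj a b ei fi ej fj :: real
  assumes m: "0 \<le> mi" "0 \<le> mj" "mi + mj \<le> L" and ab: "0\<le>a" "0\<le>b" "a+b\<le>1"
    and E: "EF L mi mj 1 a b ei fi ej fj"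
  shows "\<exists>Aei Afi Aej Afj Bei Bfi Bej Bfj Gei Gfi Gej Gfj.
     EF L mi mj a a 0 Aei Afi Aej Afj \<and> EF L mi mj b 0 b Bei Bfi Bej Bfj
   \<and> EF L mi mj (1-a-b) 0 0 Gei Gfi Gej Gfj
   \<and> ei = Aei+Bei+Gei \<and> fi = Afi+Bfi+Gfi \<and> ej = Aej+Bej+Gej \<and> fj = Afj+Bfj+Gfj"
proof -
  define g where "g = 1 - a - b"
  have g: "g \<ge> 0" using ab g_def by simp
  have id1: "a*(L-mi) + b*(L-mi) + g*(L-mi) = L - mi" and id2: "a*(L-mj) + b*(L-mj) + g*(L-mj) = L - mj"
    by (simp_all add: g_def algebra_simps)
  have e: "ei \<ge> b*mj" "fi \<ge> a*mj" "ej \<ge> a*mi" "fj \<ge> b*mi"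
     "ei+fi \<le> a*(L-mi) + b*(L-mi) + g*(L-mi)" "ej+fj \<le> a*(L-mj) + b*(L-mj) + g*(L-mj)" "ej+fi \<ge> L*a" "ei+fj \<ge> L*b"
    using E unfolding EF_def by (simp_all add: mult.commute id1 id2)
  have h1: "a*mj \<le> a*(L-mi)" "a*mi \<le> a*(L-mj)" "b*mj \<le> b*(L-mi)" "b*mi \<le> b*(L-mj)"
    using m ab by (auto intro!: mult_left_mono)
  have h3: "a*(L-mi) \<ge> 0" "a*(L-mj) \<ge> 0" "b*(L-mi) \<ge> 0" "b*(L-mj) \<ge> 0" "g*(L-mi) \<ge> 0" "g*(L-mj) \<ge> 0"
    using m ab g by auto
  have h4: "L*a = a*(L-mi) + a*mi" "L*a = a*(L-mj) + a*mj" "L*b = b*(L-mi) + b*mi" "L*b = b*(L-mj) + b*mj"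
    by (simp_all add: algebra_simps)
  have h5: "a*(L-mi) + a*(L-mj) \<ge> L*a" "b*(L-mi) + b*(L-mj) \<ge> L*b"
  proof -
    have "a*(L-mi-mj) \<ge> 0" "b*(L-mi-mj) \<ge> 0" using m ab by auto
    then show "a*(L-mi) + a*(L-mj) \<ge> L*a" "b*(L-mi) + b*(L-mj) \<ge> L*b" by (simp_all add: algebra_simps)
  qed
  note D = abs_decomp[OF e h1 h3 h4 h5]
  define \<phi> where "\<phi> = min fi (a*(L-mi))"
  define \<phi>' where "\<phi>' = min ej (a*(L-mj))"
  define \<psi> where "\<psi> = min ei (b*(L-mi))"
  define \<psi>' where "\<psi>' = min fj (b*(L-mj))"
  define Aei where "Aei = min (ei - \<psi>) (a*(L-mi) - \<phi>)"
  define Bfi where "Bfi = min (fi - \<phi>) (b*(L-mi) - \<psi>)"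
  define Afj where "Afj = min (fj - \<psi>') (a*(L-mj) - \<phi>')"
  define Bej where "Bej = min (ej - \<phi>') (b*(L-mj) - \<psi>')"
  note D' = D[folded \<phi>_def \<phi>'_def \<psi>_def \<psi>'_def, folded Aei_def Bfi_def Afj_def Bej_def]
  have F1: "EF L mi mj a a 0 Aei \<phi> \<phi>' Afj"
    using D'(1) by (simp add: EF_def algebra_simps)
  have F2: "EF L mi mj b 0 b \<psi> Bfi Bej \<psi>'"
    using D'(2) D'(3) by (simp add: EF_def algebra_simps)
  have F3: "EF L mi mj (1-a-b) 0 0 (ei - \<psi> - Aei) (fi - \<phi> - Bfi) (ej - \<phi>' - Bej) (fj - \<psi>' - Afj)"
    using D'(3-5) by (simp add: EF_def g_def[symmetric])
  show ?thesis
    apply (rule exI[of _ Aei], rule exI[of _ \<phi>], rule exI[of _ \<phi>'], rule exI[of _ Afj])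
    apply (rule exI[of _ \<psi>], rule exI[of _ Bfi], rule exI[of _ Bej], rule exI[of _ \<psi>'])
    apply (rule exI[of _ "ei - \<psi> - Aei"], rule exI[of _ "fi - \<phi> - Bfi"], rule exI[of _ "ej - \<phi>' - Bej"], rule exI[of _ "fj - \<psi>' - Afj"])
    using F1 F2 F3 by simp
qed



lemma Kd_add:
  assumes "Kd L mi mj w1 p1 a1 b1" "Kd L mi mj w2 p2 a2 b2"
  shows "Kd L mi mj (w1+w2) (p1+p2) (a1+a2) (b1+b2)"
proof -
  obtain c1 l1 d1 k1 where p1: "p1 = (c1,l1,d1,k1)" by (cases p1) auto
  obtain c2 l2 d2 k2 where p2: "p2 = (c2,l2,d2,k2)" by (cases p2) auto
  show ?thesis using assms unfolding p1 p2 Kd_def by (auto simp: field_simps)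
qed

lemma Kd_scale:
  assumes "0 \<le> t" "Kd L mi mj w p a b"
  shows "Kd L mi mj (t*w) (t *\<^sub>R p) (t*a) (t*b)"
proof -
  obtain c l d k where p: "p = (c,l,d,k)" by (cases p) auto
  have h: "l/2 + mj*b \<le> c" "c \<le> w*L - l/2 - mj*a" "k/2 + mi*a \<le> d" "d \<le> w*L - k/2 - mi*b"
     "c + l/2 \<le> d - k/2 + L*(w-a)" "d + k/2 \<le> c - l/2 + L*(w-b)" "l \<ge> w*mi" "k \<ge> w*mj"
    using assms(2) unfolding p Kd_def by auto
  have "t*(l/2 + mj*b) \<le> t*c" "t*c \<le> t*(w*L - l/2 - mj*a)" "t*(k/2 + mi*a) \<le> t*d" "t*d \<le> t*(w*L - k/2 - mi*b)"
     "t*(c + l/2) \<le> t*(d - k/2 + L*(w-a))" "t*(d + k/2) \<le> t*(c - l/2 + L*(w-b))" "t*l \<ge> t*(w*mi)" "t*k \<ge> t*(w*mj)"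
    using h assms(1) by (auto intro: mult_left_mono)
  then show ?thesis unfolding p Kd_def by (simp add: algebra_simps)
qed

lemma decomp:
  assumes m: "0 \<le> mi" "0 \<le> mj" "mi + mj \<le> L" and ab: "0\<le>a" "0\<le>b" "a+b\<le>1"
    and K: "Kd L mi mj 1 p a b"
  shows "\<exists>PA PB PG. Kd L mi mj a PA a 0 \<and> Kd L mi mj b PB 0 b \<and> Kd L mi mj (1-a-b) PG 0 0 \<and> p = PA + PB + PG"
proof -
  obtain ci li cj lj where p: "p = (ci,li,cj,lj)" by (cases p) auto
  have E: "EF L mi mj 1 a b (ci - li/2) (L - ci - li/2) (cj - lj/2) (L - cj - lj/2)"
    using EF_of_Kd K p by simp
  obtain Aei Afi Aej Afj Bei Bfi Bej Bfj Gei Gfi Gej Gfj where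
    A: "EF L mi mj a a 0 Aei Afi Aej Afj" and B: "EF L mi mj b 0 b Bei Bfi Bej Bfj"
    and G: "EF L mi mj (1-a-b) 0 0 Gei Gfi Gej Gfj"
    and S: "ci - li/2 = Aei+Bei+Gei" "L - ci - li/2 = Afi+Bfi+Gfi" "cj - lj/2 = Aej+Bej+Gej" "L - cj - lj/2 = Afj+Bfj+Gfj"
    using decomp_ef[OF m ab E] by blast
  let ?g = "1-a-b"
  show ?thesis
    apply (rule exI[of _ "((Aei + a*L - Afi)/2, a*L - Aei - Afi, (Aej + a*L - Afj)/2, a*L - Aej - Afj)"])
    apply (rule exI[of _ "((Bei + b*L - Bfi)/2, b*L - Bei - Bfi, (Bej + b*L - Bfj)/2, b*L - Bej - Bfj)"])
    apply (rule exI[of _ "((Gei + ?g*L - Gfi)/2, ?g*L - Gei - Gfi, (Gej + ?g*L - Gfj)/2, ?g*L - Gej - Gfj)"])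
    apply (intro conjI)
       apply (rule Kd_of_EF[OF A])
      apply (rule Kd_of_EF[OF B])
     apply (rule Kd_of_EF[OF G])
    using S unfolding p by (simp add: field_simps)
qed

lemma split_dir:
  assumes A: "Kd L mi mj a PA a 0" and B: "Kd L mi mj b PB 0 b" and G: "Kd L mi mj g PG 0 0"
    and t: "0 \<le> tA" "0 \<le> tB" "0 \<le> tG" and mu: "\<mu> > 0" "tA*a + tB*b + tG*g = \<mu>"
  shows "Kd L mi mj 1 ((1/\<mu>) *\<^sub>R (tA *\<^sub>R PA + tB *\<^sub>R PB + tG *\<^sub>R PG)) (tA*a/\<mu>) (tB*b/\<mu>)"
proof -
  have "Kd L mi mj (tA*a + tB*b + tG*g) (tA *\<^sub>R PA + tB *\<^sub>R PB + tG *\<^sub>R PG) (tA*a + tB*0 + tG*0) (tA*0 + tB*b + tG*0)"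
    by (intro Kd_add Kd_scale t A B G)
  then have "Kd L mi mj \<mu> (tA *\<^sub>R PA + tB *\<^sub>R PB + tG *\<^sub>R PG) (tA*a) (tB*b)" using mu by simp
  from Kd_scale[OF _ this, of "1/\<mu>"] mu show ?thesis by simp
qed

lemma all_box: "(\<forall>p::box. P p) \<longleftrightarrow> P BI \<and> P BJ" by (metis box.exhaust)
lemma all_dir: "(\<forall>s::dir. P s) \<longleftrightarrow> P DX \<and> P DY" by (metis dir.exhaust)

definition pt :: "bvec \<Rightarrow> bvec \<Rightarrow> dir \<Rightarrow> real \<times> real \<times> real \<times> real" where
  "pt c l s = (c$BI$s, l$BI$s, c$BJ$s, l$BJ$s)"

lemma lin_Kd:
  "lin_constraints L lb (c,l,u) \<longleftrightarrow>
    (\<forall>s. Kd (L s) (lb BI s) (lb BJ s) 1 (pt c l s) (u$s$BI) (u$s$BJ)) \<and> u$DX$BI + u$DX$BJ + u$DY$BI + u$DY$BJ = 1"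
  unfolding lin_constraints_def Kd_def pt_def all_box by auto



lemma dir_equiv:
  assumes a: "a \<in> {0,1}" and b: "b \<in> {0,1}" and m: "mi > 0" "mj > 0"
  shows "Kd L mi mj 1 (ci,li,cj,lj) a b \<longleftrightarrow>
    (li/2 \<le> ci \<and> ci \<le> L - li/2 \<and> li \<ge> mi \<and> lj/2 \<le> cj \<and> cj \<le> L - lj/2 \<and> lj \<ge> mj)
    \<and> (a = 1 \<longrightarrow> ci + li/2 \<le> cj - lj/2) \<and> (b = 1 \<longrightarrow> cj + lj/2 \<le> ci - li/2)"
  using a b m unfolding Kd_def by (auto simp: field_simps)

lemma ex_box: "(\<exists>p::box. P p) \<longleftrightarrow> P BI \<or> P BJ" by (metis box.exhaust)
lemma ex_dir: "(\<exists>s::dir. P s) \<longleftrightarrow> P DX \<or> P DY" by (metis dir.exhaust)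

lemma ex1_4:
  fixes f :: "dir \<times> box \<Rightarrow> real"
  assumes "\<forall>s p. f (s,p) \<in> {0,1}"
  shows "(\<exists>!sp. f sp = 1) \<longleftrightarrow> f(DX,BI) + f(DX,BJ) + f(DY,BI) + f(DY,BJ) = 1"
proof -
  have all4: "\<And>P. (\<forall>sp::dir\<times>box. P sp) \<longleftrightarrow> P (DX,BI) \<and> P (DX,BJ) \<and> P (DY,BI) \<and> P (DY,BJ)"
    unfolding split_paired_All all_dir all_box by blast
  have ex4: "\<And>P. (\<exists>sp::dir\<times>box. P sp) \<longleftrightarrow> P (DX,BI) \<or> P (DX,BJ) \<or> P (DY,BI) \<or> P (DY,BJ)"
    unfolding split_paired_Ex ex_dir ex_box by blast
  have b: "f(DX,BI) \<in> {0,1}" "f(DX,BJ) \<in> {0,1}" "f(DY,BI) \<in> {0,1}" "f(DY,BJ) \<in> {0,1}" using assms by auto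
  show ?thesis unfolding Ex1_def ex4 all4 using b
    by (simp only: insert_iff empty_iff) (elim disjE; simp)
qed

lemma part1:
  assumes lb_pos: "\<forall>k s. lb k s > 0"
  shows "Emb L lb = formulation L lb"
proof (rule set_eqI)
  fix x :: point
  obtain c l u where x: "x = (c,l,u)" by (cases x) auto
  show "x \<in> Emb L lb \<longleftrightarrow> x \<in> formulation L lb"
  proof (cases "\<forall>s p. u$s$p \<in> {0,1}")
    case False
    then show ?thesis unfolding x Emb_def formulation_def by auto
  next
    case True
    have E1: "(\<exists>!sp. u$(fst sp)$(snd sp) = 1) \<longleftrightarrow> u$DX$BI + u$DX$BJ + u$DY$BI + u$DY$BJ = 1"
      using ex1_4[of "\<lambda>sp. u$(fst sp)$(snd sp)"] True by simp
    have E2: "((c,l) \<in> Qlb L lb \<and> (\<forall>s p. u$s$p = 1 \<longrightarrow> precedes c l s p (other p))) \<longleftrightarrow>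
       (\<forall>s. Kd (L s) (lb BI s) (lb BJ s) 1 (pt c l s) (u$s$BI) (u$s$BJ))"
    proof -
      have "\<forall>s. Kd (L s) (lb BI s) (lb BJ s) 1 (pt c l s) (u$s$BI) (u$s$BJ) \<longleftrightarrow>
        (l$BI$s/2 \<le> c$BI$s \<and> c$BI$s \<le> L s - l$BI$s/2 \<and> l$BI$s \<ge> lb BI s \<and> l$BJ$s/2 \<le> c$BJ$s \<and> c$BJ$s \<le> L s - l$BJ$s/2 \<and> l$BJ$s \<ge> lb BJ s)
    \<and> (u$s$BI = 1 \<longrightarrow> c$BI$s + l$BI$s/2 \<le> c$BJ$s - l$BJ$s/2) \<and> (u$s$BJ = 1 \<longrightarrow> c$BJ$s + l$BJ$s/2 \<le> c$BI$s - l$BI$s/2)"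
        unfolding pt_def using True lb_pos by (intro allI dir_equiv) auto
      then show ?thesis unfolding Qlb_def precedes_def all_box all_dir by auto
    qed
    show ?thesis unfolding x Emb_def formulation_def using True E1 E2 lin_Kd[of L lb c l u] by auto
  qed
qed



definition cof :: "box \<Rightarrow> real \<times> real \<times> real \<times> real \<Rightarrow> real" where
  "cof k q = (if k = BI then fst q else fst (snd (snd q)))"
definition lof :: "box \<Rightarrow> real \<times> real \<times> real \<times> real \<Rightarrow> real" where
  "lof k q = (if k = BI then fst (snd q) else snd (snd (snd q)))"

lemma cof_lin: "cof k (x *\<^sub>R q + y *\<^sub>R r) = x * cof k q + y * cof k r"
  by (simp add: cof_def)
lemma lof_lin: "lof k (x *\<^sub>R q + y *\<^sub>R r) = x * lof k q + y * lof k r"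
  by (simp add: lof_def)
lemma cof_pt: "cof k (pt c l s) = c$k$s" by (cases k) (simp_all add: cof_def pt_def)
lemma lof_pt: "lof k (pt c l s) = l$k$s" by (cases k) (simp_all add: lof_def pt_def)
lemma pt_of: "pt (\<chi> k s. cof k (F s)) (\<chi> k s. lof k (F s)) s = F s"
  by (simp add: pt_def cof_def lof_def)

definition mkpt :: "(dir \<Rightarrow> real \<times> real \<times> real \<times> real) \<Rightarrow> (dir \<Rightarrow> box \<Rightarrow> real) \<Rightarrow> point" where
  "mkpt F U = ((\<chi> k s. cof k (F s)), (\<chi> k s. lof k (F s)), (\<chi> s p. U s p))"

lemma mkpt_rel:
  assumes "\<forall>s. Kd (L s) (lb BI s) (lb BJ s) 1 (F s) (U s BI) (U s BJ)"
    and "\<forall>s p. 0 \<le> U s p" and "U DX BI + U DX BJ + U DY BI + U DY BJ = 1"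
  shows "mkpt F U \<in> relaxation L lb"
proof -
  have "lin_constraints L lb (mkpt F U)"
    unfolding mkpt_def lin_Kd pt_of using assms by simp
  moreover have "\<forall>s p. 0 \<le> U s p \<and> U s p \<le> 1"
    using assms(2,3) unfolding all_dir all_box by (metis add_increasing add_increasing2 le_add_same_cancel1 add.assoc le_add_same_cancel2)
  ultimately show ?thesis unfolding relaxation_def mkpt_def by simp
qed



lemma part2:
  assumes L_pos: "\<forall>s. L s > 0" and lb_pos: "\<forall>k s. lb k s > 0"
    and hs: "\<forall>s. lb BI s + lb BJ s < L s" and ext: "x extreme_point_of relaxation L lb"
  shows "\<forall>s p. (snd (snd x))$s$p \<in> {0,1}"
proof (intro allI)
  fix s0 p0
  obtain c l u where x: "x = (c,l,u)" by (cases x) auto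
  from ext have xR: "x \<in> relaxation L lb"
    and noseg: "\<forall>y\<in>relaxation L lb. \<forall>z\<in>relaxation L lb. x \<notin> open_segment y z"
    by (auto simp: extreme_point_of_def)
  have lin: "lin_constraints L lb (c,l,u)" and ub: "\<forall>s p. 0 \<le> u$s$p \<and> u$s$p \<le> 1"
    using xR x by (auto simp: relaxation_def)
  then have K: "\<forall>s. Kd (L s) (lb BI s) (lb BJ s) 1 (pt c l s) (u$s$BI) (u$s$BJ)"
    and sum: "u$DX$BI + u$DX$BJ + u$DY$BI + u$DY$BJ = 1" by (auto simp: lin_Kd)
  show "(snd (snd x))$s0$p0 \<in> {0,1}"
  proof (rule ccontr)
    assume nb: "(snd (snd x))$s0$p0 \<notin> {0,1}"
    define lam where "lam = u$s0$p0"
    have lamf: "0 < lam" "lam < 1" using nb ub x unfolding lam_def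
      by (auto simp: less_le)
    define a where "a s = u$s$BI" for s
    define b where "b s = u$s$BJ" for s
    define g where "g s = 1 - a s - b s" for s
    have ab: "0 \<le> a s" "0 \<le> b s" "a s + b s \<le> 1" for s
    proof -
      have "0 \<le> u$DX$BI" "0 \<le> u$DX$BJ" "0 \<le> u$DY$BI" "0 \<le> u$DY$BJ" using ub by auto
      then show "0 \<le> a s" "0 \<le> b s" "a s + b s \<le> 1" using sum unfolding a_def b_def
        by (cases s; simp)+
    qed
    have "\<exists>T. Kd (L s) (lb BI s) (lb BJ s) (a s) (fst T) (a s) 0 \<and> Kd (L s) (lb BI s) (lb BJ s) (b s) (fst (snd T)) 0 (b s)
        \<and> Kd (L s) (lb BI s) (lb BJ s) (g s) (snd (snd T)) 0 0 \<and> pt c l s = fst T + fst (snd T) + snd (snd T)" for s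
    proof -
      have m: "0 \<le> lb BI s" "0 \<le> lb BJ s" "lb BI s + lb BJ s \<le> L s" using lb_pos[rule_format, of BI s] lb_pos[rule_format, of BJ s] hs[rule_format, of s] by auto
      obtain PA PB PG where "Kd (L s) (lb BI s) (lb BJ s) (a s) PA (a s) 0" "Kd (L s) (lb BI s) (lb BJ s) (b s) PB 0 (b s)"
        "Kd (L s) (lb BI s) (lb BJ s) (1 - a s - b s) PG 0 0" "pt c l s = PA + PB + PG"
        using decomp[OF m ab(1,2,3)[of s]] K unfolding a_def b_def by blast
      then show ?thesis unfolding g_def by (intro exI[of _ "(PA,PB,PG)"]) simp
    qed
    then obtain T where T: "\<forall>s. Kd (L s) (lb BI s) (lb BJ s) (a s) (fst (T s)) (a s) 0 \<and> Kd (L s) (lb BI s) (lb BJ s) (b s) (fst (snd (T s))) 0 (b s)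
        \<and> Kd (L s) (lb BI s) (lb BJ s) (g s) (snd (snd (T s))) 0 0 \<and> pt c l s = fst (T s) + fst (snd (T s)) + snd (snd (T s))"
      by metis
    define PA where "PA s = fst (T s)" for s
    define PB where "PB s = fst (snd (T s))" for s
    define PG where "PG s = snd (snd (T s))" for s
    have KA: "Kd (L s) (lb BI s) (lb BJ s) (a s) (PA s) (a s) 0"
      and KB: "Kd (L s) (lb BI s) (lb BJ s) (b s) (PB s) 0 (b s)"
      and KG: "Kd (L s) (lb BI s) (lb BJ s) (g s) (PG s) 0 0"
      and Psum: "pt c l s = PA s + PB s + PG s" for s
      using T unfolding PA_def PB_def PG_def by auto
    have gl: "lam \<le> g s" if "s \<noteq> s0" for s
    proof -
      have "g s = u$s0$BI + u$s0$BJ" using that sum unfolding g_def a_def b_def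
        by (cases s; cases s0) auto
      moreover have "lam \<le> u$s0$BI + u$s0$BJ" using ub unfolding lam_def by (cases p0) auto
      ultimately show ?thesis by simp
    qed
    define tA where "tA s = (if s = s0 \<and> p0 = BI then 1 else 0::real)" for s
    define tB where "tB s = (if s = s0 \<and> p0 = BJ then 1 else 0::real)" for s
    define tG where "tG s = (if s = s0 then 0 else lam / g s)" for s
    have tAB: "tA s * a s + tB s * b s = (if s = s0 then lam else 0)" for s
      unfolding tA_def tB_def lam_def a_def b_def by (cases p0) auto
    have tw: "tA s * a s + tB s * b s + tG s * g s = lam" for s
    proof (cases "s = s0")
      case True then show ?thesis using tAB[of s] by (simp add: tG_def)
    next
      case False then have "g s > 0" using gl lamf by force
      then show ?thesis using tAB[of s] False by (simp add: tG_def)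
    qed
    have tG01: "0 \<le> tG s \<and> tG s \<le> 1" for s
    proof (cases "s = s0")
      case False then have "g s > 0" "lam \<le> g s" using gl lamf by force+
      then show ?thesis using False lamf by (auto simp: tG_def)
    qed (auto simp: tG_def)
    have t01: "0 \<le> tA s" "tA s \<le> 1" "0 \<le> tB s" "tB s \<le> 1" "0 \<le> tG s" "tG s \<le> 1" for s
      using tG01[of s] unfolding tA_def tB_def by auto
    have tw': "(1 - tA s) * a s + (1 - tB s) * b s + (1 - tG s) * g s = 1 - lam" for s
      using tw[of s] unfolding g_def by (simp add: algebra_simps)
    define XT where "XT s = (1/lam) *\<^sub>R (tA s *\<^sub>R PA s + tB s *\<^sub>R PB s + tG s *\<^sub>R PG s)" for s
    define YT where "YT s = (1/(1-lam)) *\<^sub>R ((1 - tA s) *\<^sub>R PA s + (1 - tB s) *\<^sub>R PB s + (1 - tG s) *\<^sub>R PG s)" for s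
    define UX where "UX s p = (if p = BI then tA s * a s / lam else tB s * b s / lam)" for s p
    define UY where "UY s p = (if p = BI then (1 - tA s) * a s / (1-lam) else (1 - tB s) * b s / (1-lam))" for s p
    have KX: "Kd (L s) (lb BI s) (lb BJ s) 1 (XT s) (UX s BI) (UX s BJ)" for s
      unfolding XT_def UX_def using split_dir[OF KA KB KG t01(1,3,5) lamf(1) tw] by simp
    have KY: "Kd (L s) (lb BI s) (lb BJ s) 1 (YT s) (UY s BI) (UY s BJ)" for s
      unfolding YT_def UY_def using split_dir[OF KA KB KG _ _ _ _ tw'] t01 lamf by simp
    have UXs: "UX s BI + UX s BJ = (if s = s0 then 1 else 0)" for s
      using tAB[of s] lamf unfolding UX_def by (simp add: add_divide_distrib[symmetric])
    have UYs: "UY s BI + UY s BJ = (a s + b s - (if s = s0 then lam else 0)) / (1 - lam)" for s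
      using tAB[of s] lamf unfolding UY_def by (simp add: add_divide_distrib[symmetric] algebra_simps)
    have xtR: "mkpt XT UX \<in> relaxation L lb"
    proof (rule mkpt_rel)
      show "\<forall>s. Kd (L s) (lb BI s) (lb BJ s) 1 (XT s) (UX s BI) (UX s BJ)" using KX by blast
      show "\<forall>s p. 0 \<le> UX s p" using t01 ab lamf unfolding UX_def by simp
      show "UX DX BI + UX DX BJ + UX DY BI + UX DY BJ = 1" using UXs[of DX] UXs[of DY]
        by (cases s0) auto
    qed
    have ytR: "mkpt YT UY \<in> relaxation L lb"
    proof (rule mkpt_rel)
      show "\<forall>s. Kd (L s) (lb BI s) (lb BJ s) 1 (YT s) (UY s BI) (UY s BJ)" using KY by blast
      show "\<forall>s p. 0 \<le> UY s p" using t01 ab lamf unfolding UY_def by simp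
      have "a DX + b DX + a DY + b DY = 1" using sum unfolding a_def b_def by simp
      moreover have "UY DX BI + UY DX BJ + (UY DY BI + UY DY BJ) = ((a DX + b DX + a DY + b DY) - lam)/(1-lam)"
        unfolding UYs[of DX] UYs[of DY] by (cases s0) (simp_all add: add_divide_distrib[symmetric] algebra_simps)
      ultimately show "UY DX BI + UY DX BJ + UY DY BI + UY DY BJ = 1" using lamf by simp
    qed
    have neq: "mkpt YT UY \<noteq> mkpt XT UX"
    proof -
      have "UX s0 p0 = 1" "UY s0 p0 = 0" using lamf unfolding UX_def UY_def tA_def tB_def a_def b_def lam_def
        by (cases p0; simp)+
      then show ?thesis unfolding mkpt_def by (auto simp: vec_eq_iff)
    qed
    have comb: "(1-lam) *\<^sub>R YT s + lam *\<^sub>R XT s = pt c l s" for s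
    proof -
      have "(1-lam) *\<^sub>R YT s + lam *\<^sub>R XT s =
          ((1 - tA s) *\<^sub>R PA s + (1 - tB s) *\<^sub>R PB s + (1 - tG s) *\<^sub>R PG s) + (tA s *\<^sub>R PA s + tB s *\<^sub>R PB s + tG s *\<^sub>R PG s)"
        using lamf unfolding XT_def YT_def by simp
      also have "\<dots> = PA s + PB s + PG s" by (simp add: algebra_simps)
      finally show ?thesis using Psum by simp
    qed
    have ucomb: "u$s$p = (1-lam) * UY s p + lam * UX s p" for s p
      using lamf unfolding UX_def UY_def a_def b_def by (cases p) (auto simp: field_simps)
    have xeq: "x = (1-lam) *\<^sub>R mkpt YT UY + lam *\<^sub>R mkpt XT UX"
    proof -
      have "c$k$s = (1-lam) * cof k (YT s) + lam * cof k (XT s)" for k s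
        using cof_lin[of k "1-lam" "YT s" lam "XT s"] comb[of s] cof_pt[of k c l s] by simp
      moreover have "l$k$s = (1-lam) * lof k (YT s) + lam * lof k (XT s)" for k s
        using lof_lin[of k "1-lam" "YT s" lam "XT s"] comb[of s] lof_pt[of k c l s] by simp
      ultimately show ?thesis unfolding x mkpt_def using ucomb by (simp add: vec_eq_iff)
    qed
    have "x \<in> open_segment (mkpt YT UY) (mkpt XT UX)"
      unfolding open_segment_image_interval using neq lamf xeq by auto
    then show False using noseg xtR ytR by blast
  qed
qed


theorem theorem5p1:
  fixes L :: "dir \<Rightarrow> real" and lb :: "box \<Rightarrow> dir \<Rightarrow> real"
  assumes L_pos: "\<forall>s. L s > 0"
    and lb_pos: "\<forall>k s. lb k s > 0"
  shows "Emb L lb = formulation L lb \<and>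
         ((\<forall>s. lb BI s + lb BJ s < L s) \<longrightarrow>
           (\<forall>x. x extreme_point_of relaxation L lb \<longrightarrow>
              (\<forall>s p. (snd (snd x))$s$p \<in> {0, 1})))"
  using part1[OF lb_pos] part2[OF L_pos lb_pos] by blast

end
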